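(* Let $X$ be a real Banach space and $T:X\rightrightarrows X^*$ maximal monotone. The following are equivalent: 1. $R(T)$ is bounded; 2. for every $h\in\mathcal{F}_T$, $P_2(D(h))$ is bounded; 3. there exists $h\in\mathcal{F}_T$ with $P_2(D(h))$ bounded; 4. the functions $h(\cdot,x^* ):X\to\mathbb{R}\cup\{\pm\infty\}$, for $h\in\mathcal{F}_T$ and $x^*\in P_2D(h)$, are all real-valued and there is $0\leq L<\infty$ with $|h(x,x^* )-h(z,x^* )|\leq L\|x-z\|$ for all $x,z\in X$, $h\in\mathcal{F}_T$, $x^*\in P_2D(h)$; 5. there exists $h\in\mathcal{F}_T$ such that the functions $h(\cdot,x^* )$, $x^*\in P_2D(h)$, are all real-valued and there is $0\leq L<\infty$ with $|h(x,x^* )-h(z,x^* )|\leq L\|x-z\|$ for all $x,z\in X$, $x^*\in P_2D(h)$.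
   Context: An operator $T:X\rightrightarrows X^*$ is a subset of $X\times X^*$, with range $R(T)$ its projection onto $X^*$; $T$ is monotone if $\langle x-y,x^*-y^*\rangle\geq0$ for all $(x,x^* ),(y,y^* )\in T$, and maximal monotone if it is monotone and not properly contained in another monotone operator. $\mathcal{F}_T$ is the set of all convex lower semicontinuous $h:X\times X^*\to\mathbb{R}\cup\{\pm\infty\}$ with $h(x,x^* )\geq\langle x,x^*\rangle$ for all $(x,x^* )$ and equality on $T$. $P_1,P_2$ are the canonical projections of $X\times X^*$ onto $X$ and $X^*$; $D(h)=\{z\;|\;h(z)<\infty\}$. *)

theory Defs
  imports "HOL-Analysis.Analysis"
begin

(* X is a real Banach space ('a::banach), its dual X-dual is the space of bounded
linear functionals 'a =>L real with the operator norm. Operators T : X \<rightrightarrows> X-dual are subsets of X x X-dual.*)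

type_synonym 'a dualpair = "'a \<times> ('a \<Rightarrow>\<^sub>L real)"

definition pairing :: "'a::real_normed_vector \<Rightarrow> ('a \<Rightarrow>\<^sub>L real) \<Rightarrow> real" where
  "pairing x xs = blinfun_apply xs x"

definition monotone_op :: "('a::real_normed_vector) dualpair set \<Rightarrow> bool" where
  "monotone_op T \<longleftrightarrow>
     (\<forall>x xs y ys. (x, xs) \<in> T \<longrightarrow> (y, ys) \<in> T \<longrightarrow> pairing (x - y) (xs - ys) \<ge> 0)"

definition maximal_monotone :: "('a::real_normed_vector) dualpair set \<Rightarrow> bool" where
  "maximal_monotone T \<longleftrightarrow> monotone_op T \<and> (\<forall>S. monotone_op S \<and> T \<subseteq> S \<longrightarrow> S = T)"

definition range_op :: "('a::real_normed_vector) dualpair set \<Rightarrow> ('a \<Rightarrow>\<^sub>L real) set" where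
  "range_op T = snd ` T"

definition ereal_convex :: "('b::real_vector \<Rightarrow> ereal) \<Rightarrow> bool" where
  "ereal_convex h \<longleftrightarrow> convex {(z, r::real). h z \<le> ereal r}"

(* Lower semicontinuity (norm topology on X x X-dual): all sublevel sets closed.*)
definition ereal_lsc :: "('b::topological_space \<Rightarrow> ereal) \<Rightarrow> bool" where
  "ereal_lsc h \<longleftrightarrow> (\<forall>c. closed {z. h z \<le> c})"

definition fitz_family :: "('a::real_normed_vector) dualpair set \<Rightarrow> ('a dualpair \<Rightarrow> ereal) set" where
  "fitz_family T = {h. ereal_convex h \<and> ereal_lsc h \<and>
      (\<forall>x xs. h (x, xs) \<ge> ereal (pairing x xs)) \<and>
      (\<forall>x xs. (x, xs) \<in> T \<longrightarrow> h (x, xs) = ereal (pairing x xs))}"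

definition dom_e :: "('b \<Rightarrow> ereal) \<Rightarrow> 'b set" where
  "dom_e h = {z. h z < \<infinity>}"

end

theory Submission
  imports Defs
begin


lemma pairing_simps[simp]:
  "pairing (x + y) xs = pairing x xs + pairing y xs"
  "pairing (x - y) xs = pairing x xs - pairing y xs"
  "pairing (- x) xs = - pairing x xs"
  "pairing (c *\<^sub>R x) xs = c * pairing x xs"
  "pairing x (xs + ys) = pairing x xs + pairing x ys"
  "pairing x (xs - ys) = pairing x xs - pairing x ys"
  "pairing x (- xs) = - pairing x xs"
  "pairing x (c *\<^sub>R xs) = c * pairing x xs"
  "pairing 0 xs = 0"
  "pairing x 0 = 0"
  by (simp_all add: pairing_def blinfun.bilinear_simps)

lemma pairing_bound: "\<bar>pairing x xs\<bar> \<le> norm xs * norm x"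
  unfolding pairing_def using norm_blinfun[of xs x] by simp

lemma maximal_add:
  assumes "maximal_monotone T" "\<forall>(a,as)\<in>T. pairing (x - a) (xs - as) \<ge> 0"
  shows "(x, xs) \<in> T"
proof -
  have mono: "monotone_op T" using assms(1) by (simp add: maximal_monotone_def)
  have "monotone_op (insert (x,xs) T)"
    unfolding monotone_op_def
  proof (intro allI impI)
    fix y ys z zs assume y: "(y, ys) \<in> insert (x, xs) T" and z: "(z, zs) \<in> insert (x, xs) T"
    have sym: "pairing (u - v) (us - vs) = pairing (v - u) (vs - us)"
      for u v :: 'a and us vs :: "'a \<Rightarrow>\<^sub>L real"
      by (simp add: algebra_simps)
    show "0 \<le> pairing (y - z) (ys - zs)"
    proof (cases "(y,ys) = (x,xs)")
      case True
      then show ?thesis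
      proof (cases "(z,zs) = (x,xs)")
        case False
        then have "(z,zs) \<in> T" using z by auto
        then show ?thesis using assms(2) True by auto
      qed auto
    next
      case False
      then have yT: "(y,ys) \<in> T" using y by auto
      show ?thesis
      proof (cases "(z,zs) = (x,xs)")
        case True
        then show ?thesis using assms(2) yT sym[of x y xs ys] by auto
      next
        case False
        then have "(z,zs) \<in> T" using z by auto
        then show ?thesis using yT mono unfolding monotone_op_def by blast
      qed
    qed
  qed
  then have "insert (x,xs) T = T" using assms(1) unfolding maximal_monotone_def by blast
  then show ?thesis by blast
qed

lemma maximal_violate:
  assumes "maximal_monotone T" "(x, xs) \<notin> T"
  obtains a as where "(a,as) \<in> T" "pairing (x - a) (xs - as) < 0"
proof (rule ccontr)
  assume "\<not> thesis"
  then have "\<forall>(a,as)\<in>T. 0 \<le> pairing (x-a) (xs-as)"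
    using that by (force simp del: pairing_simps simp: not_less)
  from maximal_add[OF assms(1) this] assms(2) show False by simp
qed

lemma ereal_convexD:
  assumes "ereal_convex h" "h p \<le> ereal r" "h q \<le> ereal s" "0 \<le> t" "t \<le> 1"
  shows "h ((1-t) *\<^sub>R p + t *\<^sub>R q) \<le> ereal ((1-t) * r + t * s)"
proof -
  have "((1-t) *\<^sub>R (p,r) + t *\<^sub>R (q,s)) \<in> {(z, r::real). h z \<le> ereal r}"
    using assms unfolding ereal_convex_def by (intro convexD_alt) auto
  thus ?thesis by simp
qed

lemma fitz_lower:
  assumes "h \<in> fitz_family T" "(a,as) \<in> T" "h (x,xs) \<le> ereal c"
  shows "pairing x as + pairing a xs - pairing a as \<le> c"
proof (rule ccontr)
  define X where "X = pairing x xs"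
  define P where "P = pairing a as"
  define D where "D = pairing x as + pairing a xs - P"
  assume "\<not> pairing x as + pairing a xs - pairing a as \<le> c"
  then have gt: "D > c" by (simp add: D_def P_def)
  have key: "c - D \<ge> t * (X - D)" if t: "0 < t" "t \<le> 1" for t
  proof -
    have hT: "h (a,as) \<le> ereal P" using assms by (simp add: fitz_family_def P_def)
    have "h ((1-t) *\<^sub>R (a,as) + t *\<^sub>R (x,xs)) \<le> ereal ((1-t)*P + t*c)"
      using ereal_convexD[OF _ hT assms(3)] assms(1) t by (simp add: fitz_family_def)
    moreover have "h ((1-t) *\<^sub>R (a,as) + t *\<^sub>R (x,xs)) \<ge>
        ereal (pairing ((1-t) *\<^sub>R a + t *\<^sub>R x) ((1-t) *\<^sub>R as + t *\<^sub>R xs))"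
      using assms(1) unfolding fitz_family_def by (simp del: pairing_simps)
    ultimately have "ereal (pairing ((1-t) *\<^sub>R a + t *\<^sub>R x) ((1-t) *\<^sub>R as + t *\<^sub>R xs)) \<le> ereal ((1-t)*P + t*c)"
      by (rule order_trans[rotated])
    then have "pairing ((1-t) *\<^sub>R a + t *\<^sub>R x) ((1-t) *\<^sub>R as + t *\<^sub>R xs) \<le> (1-t)*P + t*c"
      by (simp only: ereal_less_eq(3))
    then have "(1-t)*(1-t)*P + (1-t)*t*(D + P) + t*t*X \<le> (1-t)*P + t*c"
      by (simp add: D_def P_def X_def algebra_simps)
    then have "t * (t*X + (1-t)*D) \<le> t * c" by (simp add: algebra_simps)
    then have "t*X + (1-t)*D \<le> c" using t by simp
    then show ?thesis by (simp add: algebra_simps)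
  qed
  define t where "t = min 1 ((D - c) / (2 * (\<bar>X - D\<bar> + 1)))"
  have den: "0 < 2 * (\<bar>X - D\<bar> + 1)"
  proof -
    have "0 < \<bar>X - D\<bar> + 1" by (simp add: add_nonneg_pos)
    then show ?thesis by simp
  qed
  have "0 < (D - c) / (2 * (\<bar>X - D\<bar> + 1))" using gt den by (intro divide_pos_pos) auto
  then have t0: "0 < t" "t \<le> 1" by (auto simp: t_def)
  have "t * \<bar>X - D\<bar> \<le> (D - c) / (2 * (\<bar>X - D\<bar> + 1)) * \<bar>X - D\<bar>"
    by (intro mult_right_mono) (auto simp: t_def)
  also have "\<dots> < D - c"
  proof -
    have e1: "(D - c) / (2 * (\<bar>X - D\<bar> + 1)) * \<bar>X - D\<bar> = (D - c) * (\<bar>X - D\<bar> / (2 * (\<bar>X - D\<bar> + 1)))"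
      by simp
    have q: "\<bar>X - D\<bar> / (2 * (\<bar>X - D\<bar> + 1)) < 1"
    proof -
      have "\<bar>X - D\<bar> < 2 * (\<bar>X - D\<bar> + 1)" by simp
      moreover note den
      ultimately show ?thesis by (simp add: divide_less_eq)
    qed
    have "(D - c) * (\<bar>X - D\<bar> / (2 * (\<bar>X - D\<bar> + 1))) < (D - c) * 1"
      using gt q by (intro mult_strict_left_mono) auto
    then show ?thesis using e1 by simp
  qed
  finally have "t * \<bar>X - D\<bar> < D - c" .
  moreover have "t * (X - D) \<ge> - (t * \<bar>X - D\<bar>)" using t0 
    by (metis abs_ge_minus_self abs_mult abs_of_pos minus_le_iff)
  ultimately show False using key[OF t0] by linarith
qed

definition fpair :: "'a::real_normed_vector dualpair \<Rightarrow> 'a dualpair \<Rightarrow> real" where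
  "fpair p z = pairing (fst z) (snd p) + pairing (fst p) (snd z) - pairing (fst p) (snd p)"

definition fitz :: "'a::real_normed_vector dualpair set \<Rightarrow> 'a dualpair \<Rightarrow> ereal" where
  "fitz T z = (SUP p\<in>T. ereal (fpair p z))"

lemma fpair_affine: "u + v = 1 \<Longrightarrow> fpair p (u *\<^sub>R z1 + v *\<^sub>R z2) = u * fpair p z1 + v * fpair p z2"
  unfolding fpair_def by (simp add: algebra_simps) (metis add_diff_cancel_left' distrib_right mult_1)

lemma fpair_cont: "continuous_on UNIV (\<lambda>z. ereal (fpair p z))"
  unfolding fpair_def pairing_def
  by (intro continuous_on_ereal continuous_intros)

lemma fitz_mem:
  assumes "maximal_monotone T"
  shows "fitz T \<in> fitz_family T"
proof -
  have mono: "monotone_op T" using assms by (simp add: maximal_monotone_def)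
  have cvx: "ereal_convex (fitz T)"
    unfolding ereal_convex_def
  proof (rule convexI)
    fix x y :: "'a dualpair \<times> real" and u v :: real
    assume x: "x \<in> {(z, r). fitz T z \<le> ereal r}" and y: "y \<in> {(z, r). fitz T z \<le> ereal r}"
      and uv: "0 \<le> u" "0 \<le> v" "u + v = 1"
    obtain z1 r1 where x': "x = (z1, r1)" by fastforce
    obtain z2 r2 where y': "y = (z2, r2)" by fastforce
    have "fitz T (u *\<^sub>R z1 + v *\<^sub>R z2) \<le> ereal (u * r1 + v * r2)"
      unfolding fitz_def
    proof (rule SUP_least)
      fix p assume p: "p \<in> T"
      have "ereal (fpair p z1) \<le> ereal r1" using x x' p unfolding fitz_def by (auto simp: SUP_le_iff)
      moreover have "ereal (fpair p z2) \<le> ereal r2" using y y' p unfolding fitz_def by (auto simp: SUP_le_iff)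
      ultimately have "u * fpair p z1 + v * fpair p z2 \<le> u * r1 + v * r2"
        using uv by (simp add: add_mono mult_left_mono)
      then have "fpair p (u *\<^sub>R z1 + v *\<^sub>R z2) \<le> u * r1 + v * r2"
        using fpair_affine[OF uv(3), of p z1 z2] by linarith
      then show "ereal (fpair p (u *\<^sub>R z1 + v *\<^sub>R z2)) \<le> ereal (u * r1 + v * r2)"
        by simp
    qed
    then show "u *\<^sub>R x + v *\<^sub>R y \<in> {(z, r). fitz T z \<le> ereal r}" using x' y' by simp
  qed
  have lsc: "ereal_lsc (fitz T)"
    unfolding ereal_lsc_def
  proof
    fix c :: ereal
    have "{z. fitz T z \<le> c} = (\<Inter>p\<in>T. {z. ereal (fpair p z) \<le> c})"
      unfolding fitz_def by (auto simp: SUP_le_iff)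
    moreover have "closed {z. ereal (fpair p z) \<le> c}" for p
      by (rule closed_Collect_le[OF fpair_cont continuous_on_const])
    ultimately show "closed {z. fitz T z \<le> c}" by (simp only:) (rule closed_INT, blast)
  qed
  have ge: "fitz T (x, xs) \<ge> ereal (pairing x xs)" for x xs
  proof (cases "(x, xs) \<in> T")
    case True
    then have "ereal (fpair (x,xs) (x,xs)) \<le> fitz T (x,xs)" unfolding fitz_def by (rule SUP_upper)
    then show ?thesis by (simp add: fpair_def)
  next
    case False
    obtain a as where a: "(a,as) \<in> T" "pairing (x - a) (xs - as) < 0"
      using maximal_violate[OF assms False] by blast
    have "ereal (fpair (a,as) (x,xs)) \<le> fitz T (x,xs)" unfolding fitz_def using a(1) by (rule SUP_upper)
    moreover have "pairing x xs \<le> fpair (a,as) (x,xs)" using a(2) by (simp add: fpair_def)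
    ultimately show ?thesis by (meson ereal_less_eq(3) order_trans)
  qed
  have eq: "fitz T (x, xs) = ereal (pairing x xs)" if xT: "(x, xs) \<in> T" for x xs
  proof (rule antisym)
    show "fitz T (x, xs) \<le> ereal (pairing x xs)"
      unfolding fitz_def
    proof (rule SUP_least)
      fix p assume p: "p \<in> T"
      obtain a as where p': "p = (a, as)" by fastforce
      have "pairing (x - a) (xs - as) \<ge> 0" using mono xT p p' unfolding monotone_op_def by blast
      then show "ereal (fpair p (x, xs)) \<le> ereal (pairing x xs)" using p' by (simp add: fpair_def)
    qed
  qed (rule ge)
  show ?thesis unfolding fitz_family_def using cvx lsc ge eq by blast
qed

lemma bdd_dom:
  assumes "maximal_monotone T" "\<forall>p\<in>T. norm (snd p) \<le> M" "0 \<le> M"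
    "h \<in> fitz_family T" "h (x, xs) < \<infinity>"
  shows "norm xs \<le> M + 1"
proof (rule ccontr)
  assume "\<not> norm xs \<le> M + 1"
  then have big: "norm xs > M + 1" by simp
  have "\<exists>y. pairing y xs > (M + 1) * norm y"
  proof (rule ccontr)
    assume "\<not> ?thesis"
    then have le: "pairing y xs \<le> (M + 1) * norm y" for y by (simp add: not_less)
    have "norm (blinfun_apply xs y) \<le> (M + 1) * norm y" for y
      using le[of y] le[of "-y"] by (simp add: pairing_def blinfun.minus_right)
    then have "norm xs \<le> M + 1" using assms(3) by (intro norm_blinfun_bound) auto
    then show False using big by simp
  qed
  then obtain y where y: "pairing y xs > (M + 1) * norm y" by blast
  have hge: "h (x,xs) \<ge> ereal (pairing x xs)" using assms(4) by (simp add: fitz_family_def)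
  define c where "c = real_of_ereal (h (x, xs))"
  have "h (x, xs) \<noteq> -\<infinity>" using hge by auto
  then have hc: "h (x, xs) = ereal c" unfolding c_def using assms(5)
    by (cases "h (x, xs)") auto
  define \<kappa> where "\<kappa> = pairing y xs - M * norm y"
  have kpos: "\<kappa> > 0" using y by (simp add: \<kappa>_def algebra_simps) (smt (verit) norm_ge_zero)
  define t where "t = (\<bar>c\<bar> + M * norm x + 1) / \<kappa>"
  have "M * norm x \<ge> 0" using assms(3) by simp
  then have "\<bar>c\<bar> + M * norm x + 1 > 0" by linarith
  then have tpos: "t > 0" using kpos by (simp add: t_def)
  have tk: "t * \<kappa> = \<bar>c\<bar> + M * norm x + 1" using kpos by (simp add: t_def)
  have notT: "(t *\<^sub>R y, xs) \<notin> T" using assms(2) big by force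
  obtain a as where a: "(a,as) \<in> T" "pairing (t *\<^sub>R y - a) (xs - as) < 0"
    using maximal_violate[OF assms(1) notT] by blast
  have asM: "norm as \<le> M" using assms(2) a(1) by force
  have low: "pairing x as + pairing a xs - pairing a as \<le> c"
    using fitz_lower[OF assms(4) a(1)] hc by simp
  have "pairing y as \<le> M * norm y"
    using pairing_bound[of y as] asM by (smt (verit, best) mult_right_mono norm_ge_zero)
  then have "t * (pairing y xs - pairing y as) \<ge> t * \<kappa>"
    using tpos by (intro mult_left_mono) (auto simp: \<kappa>_def)
  moreover have "pairing a xs - pairing a as > t * (pairing y xs - pairing y as)"
    using a(2) by (simp add: algebra_simps)
  moreover have "pairing x as \<ge> - (M * norm x)"
    using pairing_bound[of x as] asM by (smt (verit, best) mult_right_mono norm_ge_zero)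
  ultimately show False using low tk by linarith
qed



lemma min_sq_ineq: "(min 0 (a + s::real))\<^sup>2 \<le> (min 0 a)\<^sup>2 + 2 * s * min 0 a + s\<^sup>2"
proof (cases "a \<ge> 0")
  case True
  show ?thesis
  proof (cases "a + s \<ge> 0")
    case False
    have "a * (a + 2 * s) \<le> 0" using True False by (intro mult_nonneg_nonpos) auto
    then have "(a+s)*(a+s) \<le> s * s" by (simp add: algebra_simps)
    then show ?thesis using True False by (simp add: power2_eq_square min_def)
  qed (use True in \<open>auto simp: min_def\<close>)
next
  case False
  have "0 \<le> (a + s) * (a + s)" by simp
  then show ?thesis using False
    by (cases "a + s \<ge> 0") (auto simp: power2_eq_square min_def algebra_simps)
qed

lemma quad_nonneg_imp:
  fixes S B :: real
  assumes "B \<ge> 0" "\<And>t. 0 < t \<Longrightarrow> t \<le> 1 \<Longrightarrow> 0 \<le> 2 * t * S + t\<^sup>2 * B"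
  shows "S \<ge> 0"
proof (rule ccontr)
  assume "\<not> S \<ge> 0" then have S: "S < 0" by simp
  define t where "t = min 1 (- S / (B + 1))"
  have t: "0 < t" "t \<le> 1" using S assms(1) by (auto simp: t_def divide_neg_pos)
  have "t * B \<le> (- S / (B + 1)) * B" using assms(1) by (intro mult_right_mono) (auto simp: t_def)
  also have "\<dots> < - S"
  proof -
    have "(- S / (B + 1)) * B = (-S) * (B / (B + 1))" by simp
    also have "\<dots> < (-S) * 1" using S assms(1) by (intro mult_strict_left_mono) auto
    finally show ?thesis by simp
  qed
  finally have "2 * S + t * B < 0" using S by linarith
  then have "t * (2 * S + t * B) < 0" using t by (simp add: mult_pos_neg)
  then show False using assms(2)[OF t] by (simp add: power2_eq_square algebra_simps)
qed

lemma simplex_compact: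
  assumes "finite F"
  shows "compact {l::'p \<Rightarrow> real. (\<forall>q. q \<notin> F \<longrightarrow> l q = 0) \<and> (\<forall>q\<in>F. 0 \<le> l q) \<and> sum l F = 1}"
    (is "compact ?D")
proof -
  let ?K = "PiE UNIV (\<lambda>q. if q \<in> F then {0..1::real} else {0})"
  have "compactin (product_topology (\<lambda>_. euclidean) UNIV) ?K"
    by (subst compactin_PiE) auto
  then have K: "compact ?K" by (simp add: euclidean_product_topology)
  have cl: "closed ?D"
  proof -
    have "?D = (\<Inter>q\<in>-F. {l. l q = 0}) \<inter> (\<Inter>q\<in>F. {l. 0 \<le> l q}) \<inter> {l. sum l F = 1}"
      by auto
    moreover have "closed {l::'p\<Rightarrow>real. l q = 0}" for q
      by (rule closed_Collect_eq) (auto intro: continuous_on_product_coordinates)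
    moreover have "closed {l::'p\<Rightarrow>real. 0 \<le> l q}" for q
      by (rule closed_Collect_le) (auto intro: continuous_on_product_coordinates)
    moreover have "closed {l::'p\<Rightarrow>real. sum l F = 1}"
      by (rule closed_Collect_eq) (auto intro!: continuous_intros continuous_on_product_coordinates)
    ultimately show ?thesis by (simp only:) (intro closed_Int closed_INT; blast)
  qed
  have "?D \<subseteq> ?K"
  proof
    fix l assume l: "l \<in> ?D"
    have "l q \<le> 1" if "q \<in> F" for q
      using member_le_sum[of q F l] l that assms by auto
    then show "l \<in> ?K" using l by (auto simp: PiE_iff)
  qed
  then have "?D = ?K \<inter> ?D" by blast
  then show ?thesis using compact_Int_closed[OF K cl] by simp
qed

lemma df_finite:
  fixes c :: "'p \<Rightarrow> 'p \<Rightarrow> real"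
  assumes fin: "finite F" and ne: "F \<noteq> {}" and sk: "\<forall>p\<in>F. \<forall>q\<in>F. c p q + c q p \<ge> 0"
  shows "\<exists>l. (\<forall>q\<in>F. l q \<ge> 0) \<and> sum l F = 1 \<and> (\<forall>p\<in>F. (\<Sum>q\<in>F. l q * c p q) \<ge> 0)"
proof -
  define D where "D = {l::'p \<Rightarrow> real. (\<forall>q. q \<notin> F \<longrightarrow> l q = 0) \<and> (\<forall>q\<in>F. 0 \<le> l q) \<and> sum l F = 1}"
  define dd where "dd l = (\<Sum>p\<in>F. (min 0 (\<Sum>q\<in>F. l q * c p q))\<^sup>2)" for l
  have cD: "compact D" unfolding D_def by (rule simplex_compact[OF fin])
  obtain p0 where p0: "p0 \<in> F" using ne by blast
  have neD: "D \<noteq> {}"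
  proof -
    have "(\<lambda>q. if q = p0 then 1 else 0) \<in> D" using p0 fin by (auto simp: D_def)
    then show ?thesis by blast
  qed
  have "continuous_on UNIV dd"
    unfolding dd_def by (intro continuous_intros continuous_on_product_coordinates)
  then have cont: "continuous_on D dd" by (rule continuous_on_subset) simp
  obtain l0 where l0: "l0 \<in> D" and lmin: "\<And>l. l \<in> D \<Longrightarrow> dd l0 \<le> dd l"
    using continuous_attains_inf[OF cD neD cont] by blast
  define A where "A p = (\<Sum>q\<in>F. l0 q * c p q)" for p
  have "\<forall>p\<in>F. A p \<ge> 0"
  proof (rule ccontr)
    assume "\<not> (\<forall>p\<in>F. A p \<ge> 0)"
    then obtain p1 where p1: "p1 \<in> F" "A p1 < 0" by (auto simp: not_le)
    define d0 where "d0 = dd l0"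
    have d0A: "d0 = (\<Sum>p\<in>F. (min 0 (A p))\<^sup>2)" by (simp add: d0_def dd_def A_def)
    have d0pos: "d0 > 0"
    proof -
      have "(min 0 (A p1))\<^sup>2 > 0" using p1 by simp
      moreover have "(min 0 (A p1))\<^sup>2 \<le> d0" unfolding d0A
        by (rule member_le_sum[OF p1(1)]) (auto simp: fin)
      ultimately show ?thesis by linarith
    qed
    define \<mu> where "\<mu> p = - min 0 (A p)" for p
    have mu_nn: "\<mu> p \<ge> 0" for p by (simp add: \<mu>_def)
    have key: "(\<Sum>p\<in>F. \<mu> p * c p j) \<le> - d0" if j: "j \<in> F" for j
    proof -
      define b where "b p = c p j - A p" for p
      define S where "S = (\<Sum>p\<in>F. min 0 (A p) * b p)"
      define B where "B = (\<Sum>p\<in>F. (b p)\<^sup>2)"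
      have B0: "B \<ge> 0" unfolding B_def by (intro sum_nonneg) auto
      have "0 \<le> 2 * t * S + t\<^sup>2 * B" if t: "0 < t" "t \<le> 1" for t
      proof -
        define lt where "lt q = (1 - t) * l0 q + t * (if q = j then 1 else 0)" for q
        have "lt \<in> D" using l0 t j fin
          by (auto simp: D_def lt_def sum.distrib sum_distrib_left[symmetric] intro!: add_nonneg_nonneg)
        then have "d0 \<le> dd lt" using lmin by (simp add: d0_def)
        moreover have Alt: "(\<Sum>q\<in>F. lt q * c p q) = A p + t * b p" for p
        proof -
          have pt: "lt q * c p q = (1 - t) * (l0 q * c p q) + t * (if q = j then c p q else 0)" for q
            by (simp add: lt_def algebra_simps)
          have "(\<Sum>q\<in>F. lt q * c p q) = (1 - t) * A p + t * (\<Sum>q\<in>F. (if q = j then c p q else 0))"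
            unfolding pt A_def by (simp only: sum.distrib sum_distrib_left[symmetric])
          also have "\<dots> = (1 - t) * A p + t * c p j" using j fin by simp
          finally show ?thesis by (simp add: b_def algebra_simps)
        qed
        have "dd lt \<le> (\<Sum>p\<in>F. (min 0 (A p))\<^sup>2 + 2 * (t * b p) * min 0 (A p) + (t * b p)\<^sup>2)"
          unfolding dd_def Alt by (intro sum_mono min_sq_ineq)
        also have "\<dots> = d0 + 2 * t * S + t\<^sup>2 * B"
          by (simp add: d0A S_def B_def sum.distrib sum_distrib_left power_mult_distrib algebra_simps)
        finally show ?thesis using \<open>d0 \<le> dd lt\<close> by linarith
      qed
      then have "S \<ge> 0" using quad_nonneg_imp[OF B0] by blast
      moreover have "S = - (\<Sum>p\<in>F. \<mu> p * c p j) - d0"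
      proof -
        have "min 0 (A p) * A p = (min 0 (A p))\<^sup>2" for p
          by (simp add: min_def power2_eq_square)
        then show ?thesis
          by (simp add: S_def b_def \<mu>_def d0A algebra_simps sum_subtractf sum_negf)
      qed
      ultimately show ?thesis by linarith
    qed
    have mu_sum: "(\<Sum>j\<in>F. \<mu> j) > 0"
    proof -
      have "\<mu> p1 > 0" using p1 by (simp add: \<mu>_def)
      moreover have "\<mu> p1 \<le> (\<Sum>j\<in>F. \<mu> j)" by (rule member_le_sum[OF p1(1)]) (auto simp: fin mu_nn)
      ultimately show ?thesis by linarith
    qed
    have "(\<Sum>j\<in>F. \<mu> j * (\<Sum>p\<in>F. \<mu> p * c p j)) \<le> (\<Sum>j\<in>F. \<mu> j * (- d0))"
      by (intro sum_mono mult_left_mono key mu_nn)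
    also have "\<dots> = - d0 * (\<Sum>j\<in>F. \<mu> j)" by (simp add: sum_distrib_left sum_negf algebra_simps)
    also have "\<dots> < 0" using d0pos mu_sum by (simp add: mult_pos_pos)
    finally have neg: "(\<Sum>j\<in>F. \<mu> j * (\<Sum>p\<in>F. \<mu> p * c p j)) < 0" .
    define Q where "Q = (\<Sum>j\<in>F. \<Sum>p\<in>F. \<mu> j * \<mu> p * c p j)"
    have Qe: "Q = (\<Sum>j\<in>F. \<mu> j * (\<Sum>p\<in>F. \<mu> p * c p j))"
      by (simp add: Q_def sum_distrib_left mult.assoc)
    have "Q = (\<Sum>p\<in>F. \<Sum>j\<in>F. \<mu> j * \<mu> p * c p j)" unfolding Q_def by (rule sum.swap)
    also have "\<dots> = (\<Sum>j\<in>F. \<Sum>p\<in>F. \<mu> j * \<mu> p * c j p)"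
      by (intro sum.cong refl) (simp add: mult.commute)
    finally have Q2: "Q = (\<Sum>j\<in>F. \<Sum>p\<in>F. \<mu> j * \<mu> p * c j p)" .
    have "(\<Sum>j\<in>F. \<Sum>p\<in>F. \<mu> j * \<mu> p * (c p j + c j p)) =
      (\<Sum>j\<in>F. \<Sum>p\<in>F. \<mu> j * \<mu> p * c p j) + (\<Sum>j\<in>F. \<Sum>p\<in>F. \<mu> j * \<mu> p * c j p)"
      by (simp add: distrib_left sum.distrib)
    then have "2 * Q = (\<Sum>j\<in>F. \<Sum>p\<in>F. \<mu> j * \<mu> p * (c p j + c j p))"
      using Q2 unfolding Q_def by simp
    also have "\<dots> \<ge> 0" using sk mu_nn by (intro sum_nonneg) (simp add: mult_nonneg_nonneg)
    finally have "Q \<ge> 0" by simp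
    then show False using neg Qe by simp
  qed
  then show ?thesis using l0 by (auto simp: D_def A_def)
qed



lemma full_domain:
  fixes T :: "('a::real_normed_vector) dualpair set"
  assumes maxm: "maximal_monotone T" and bd: "\<forall>p\<in>T. norm (snd p) \<le> M" and M0: "0 \<le> M"
  shows "\<exists>xs. (x0, xs) \<in> T"
proof -
  have mono: "monotone_op T" using maxm by (simp add: maximal_monotone_def)
  define K where "K = PiE UNIV (\<lambda>x::'a. {-(M * norm x)..M * norm x})"
  have "compactin (product_topology (\<lambda>_. euclidean) UNIV) K"
    unfolding K_def by (subst compactin_PiE) auto
  then have cK: "compact K" by (simp add: euclidean_product_topology)
  define Lin where "Lin = (\<Inter>xy\<in>UNIV. {f::'a\<Rightarrow>real. f (fst xy + snd xy) = f (fst xy) + f (snd xy)})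
      \<inter> (\<Inter>cx\<in>UNIV. {f::'a\<Rightarrow>real. f (fst cx *\<^sub>R snd cx) = fst cx * f (snd cx)})"
  have cLin: "closed Lin"
  proof -
    have "closed {f::'a\<Rightarrow>real. f (fst xy + snd xy) = f (fst xy) + f (snd xy)}" for xy
      by (rule closed_Collect_eq) (auto intro!: continuous_intros continuous_on_product_coordinates)
    moreover have "closed {f::'a\<Rightarrow>real. f (fst cx *\<^sub>R snd cx) = fst cx * f (snd cx)}" for cx
      by (rule closed_Collect_eq) (auto intro!: continuous_intros continuous_on_product_coordinates)
    ultimately show ?thesis unfolding Lin_def by (intro closed_Int closed_INT) auto
  qed
  define S where "S = K \<inter> Lin"
  have cS: "compact S" unfolding S_def by (rule compact_Int_closed[OF cK cLin])
  define C where "C p = {f::'a\<Rightarrow>real. pairing (x0 - fst p) (snd p) \<le> f (x0 - fst p)}" for p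
  have cC: "closed (C p)" for p
    unfolding C_def by (rule closed_Collect_le) (auto intro!: continuous_intros continuous_on_product_coordinates)
  have blS: "blinfun_apply xs \<in> S" if "norm xs \<le> M" for xs :: "'a \<Rightarrow>\<^sub>L real"
  proof -
    have ab: "\<bar>blinfun_apply xs x\<bar> \<le> M * norm x" for x
      using norm_blinfun[of xs x] that by (smt (verit) mult_right_mono norm_ge_zero real_norm_def)
    have "-(M * norm x) \<le> blinfun_apply xs x \<and> blinfun_apply xs x \<le> M * norm x" for x
      using ab[of x] unfolding abs_le_iff by linarith
    then have "blinfun_apply xs \<in> K" unfolding K_def by auto
    moreover have "blinfun_apply xs \<in> Lin" unfolding Lin_def
      by (auto simp: blinfun.add_right blinfun.scaleR_right)
    ultimately show ?thesis by (simp add: S_def)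
  qed
  have fip: "S \<inter> (\<Inter>p\<in>T. C p) \<noteq> {}"
  proof (rule compact_imp_fip_image[OF cS cC])
    fix I' assume fin: "finite I'" and sub: "I' \<subseteq> T"
    show "S \<inter> (\<Inter>p\<in>I'. C p) \<noteq> {}"
    proof (cases "I' = {}")
      case True
      have "blinfun_apply 0 \<in> S" using M0 by (intro blS) simp
      then show ?thesis using True by auto
    next
      case False
      define c where "c p q = pairing (x0 - fst p) (snd q - snd p)" for p q :: "'a dualpair"
      have sk: "\<forall>p\<in>I'. \<forall>q\<in>I'. c p q + c q p \<ge> 0"
      proof (intro ballI)
        fix p q assume p: "p \<in> I'" and q: "q \<in> I'"
        obtain a as where pa: "p = (a, as)" by fastforce
        obtain b bs where qb: "q = (b, bs)" by fastforce
        have "pairing (b - a) (bs - as) \<ge> 0" using mono sub p q pa qb unfolding monotone_op_def by blast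
        moreover have "c p q + c q p = pairing (b - a) (bs - as)"
          unfolding c_def pa qb by (simp add: algebra_simps)
        ultimately show "c p q + c q p \<ge> 0" by simp
      qed
      obtain l where l: "\<forall>q\<in>I'. l q \<ge> 0" "sum l I' = 1" "\<forall>p\<in>I'. (\<Sum>q\<in>I'. l q * c p q) \<ge> 0"
        using df_finite[OF fin False sk] by blast
      define xs where "xs = (\<Sum>q\<in>I'. l q *\<^sub>R snd q)"
      have "norm xs \<le> (\<Sum>q\<in>I'. norm (l q *\<^sub>R snd q))" unfolding xs_def by (rule norm_sum)
      also have "\<dots> \<le> (\<Sum>q\<in>I'. l q * M)"
        using l(1) sub bd by (intro sum_mono) (auto intro!: mult_left_mono)
      also have "\<dots> = M" using l(2) by (simp add: sum_distrib_right[symmetric])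
      finally have "blinfun_apply xs \<in> S" by (rule blS)
      moreover have "blinfun_apply xs \<in> C p" if p: "p \<in> I'" for p
      proof -
        have e1: "blinfun_apply xs (x0 - fst p) = (\<Sum>q\<in>I'. l q * pairing (x0 - fst p) (snd q))"
          unfolding xs_def by (simp add: blinfun.sum_left blinfun.scaleR_left pairing_def)
        have e2: "pairing (x0 - fst p) (snd p) = (\<Sum>q\<in>I'. l q * pairing (x0 - fst p) (snd p))"
          using l(2) by (simp add: sum_distrib_right[symmetric])
        have e3: "(\<Sum>q\<in>I'. l q * c p q) = (\<Sum>q\<in>I'. l q * pairing (x0 - fst p) (snd q)) -
            (\<Sum>q\<in>I'. l q * pairing (x0 - fst p) (snd p))"
        proof -
          have "l q * c p q = l q * pairing (x0 - fst p) (snd q) - l q * pairing (x0 - fst p) (snd p)" for q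
            by (simp only: c_def pairing_def blinfun.diff_left right_diff_distrib)
          then show ?thesis by (simp only: sum_subtractf)
        qed
        have ge: "0 \<le> (\<Sum>q\<in>I'. l q * c p q)" using l(3) p by blast
        show ?thesis unfolding C_def mem_Collect_eq using e1 e2 e3 ge by linarith
      qed
      ultimately show ?thesis by blast
    qed
  qed
  then obtain f where fS: "f \<in> S" and fC: "\<And>p. p \<in> T \<Longrightarrow> f \<in> C p" by blast
  have bl: "bounded_linear f"
  proof (rule bounded_linear_intro[where K = M])
    fix x y show "f (x + y) = f x + f y" using fS unfolding S_def Lin_def by auto
  next
    fix r x show "f (r *\<^sub>R x) = r *\<^sub>R f x" using fS unfolding S_def Lin_def by auto
  next
    fix x
    have "-(M * norm x) \<le> f x \<and> f x \<le> M * norm x" using fS unfolding S_def K_def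
      by (auto simp: PiE_iff)
    then show "norm (f x) \<le> norm x * M" by (smt (verit) mult.commute real_norm_def)
  qed
  define xs where "xs = Blinfun f"
  have xsf: "blinfun_apply xs = f" unfolding xs_def using bl by (rule bounded_linear_Blinfun_apply)
  have "\<forall>(a,as)\<in>T. pairing (x0 - a) (xs - as) \<ge> 0"
  proof (clarify)
    fix a as assume "(a, as) \<in> T"
    then have "f \<in> C (a, as)" by (rule fC)
    then show "pairing (x0 - a) (xs - as) \<ge> 0" unfolding C_def
      by (simp del: pairing_simps add: pairing_def blinfun.diff_left xsf)
  qed
  then show ?thesis using maximal_add[OF maxm] by blast
qed



lemma lip_upper:
  fixes T :: "('a::real_normed_vector) dualpair set"
  assumes maxm: "maximal_monotone T" and bd: "\<forall>p\<in>T. norm (snd p) \<le> M" and M0: "0 \<le> M"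
    and hF: "h \<in> fitz_family T" and hz: "h (z, xs) \<le> ereal c"
  shows "h (x, xs) \<le> ereal (c + M * norm (x - z))"
proof -
  define u where "u = x - z"
  have cvx: "ereal_convex h" and lsc: "ereal_lsc h"
    and hT: "\<And>a as. (a, as) \<in> T \<Longrightarrow> h (a, as) = ereal (pairing a as)"
    and hge: "\<And>a as. h (a, as) \<ge> ereal (pairing a as)"
    using hF by (auto simp: fitz_family_def)
  have eps: "h (x, xs) \<le> ereal (c + M * norm u + e)" if e: "e > 0" for e
  proof -
    let ?L = "{w. h w \<le> ereal (c + M * norm u + e)}"
    have cl: "closed ?L" using lsc unfolding ereal_lsc_def by blast
    have "\<exists>y\<in>?L. dist y (x, xs) < \<delta>" if d: "\<delta> > 0" for \<delta>
    proof -
      define t where "t = min 1 (min (e / (M * norm z + \<bar>c\<bar> + 1)) (\<delta> / (M + norm xs + 1)))"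
      have "M * norm z \<ge> 0" using M0 by simp
      then have p1: "M * norm z + \<bar>c\<bar> + 1 > 0" by linarith
      have p2: "M + norm xs + 1 > 0" using M0 norm_ge_zero[of xs] by linarith
      have t0: "0 < t" "t \<le> 1" using e d p1 p2 by (auto simp: t_def)
      have t1: "t * (M * norm z + \<bar>c\<bar>) \<le> e"
      proof -
        have "t * (M * norm z + \<bar>c\<bar>) \<le> (e / (M * norm z + \<bar>c\<bar> + 1)) * (M * norm z + \<bar>c\<bar>)"
          using M0 by (intro mult_right_mono) (auto simp: t_def)
        also have "\<dots> = e * ((M * norm z + \<bar>c\<bar>) / (M * norm z + \<bar>c\<bar> + 1))" by simp
        also have "\<dots> \<le> e * 1" using e p1 by (intro mult_left_mono) (auto simp: divide_le_eq)
        finally show ?thesis by simp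
      qed
      have t2: "t * (M + norm xs) < \<delta>"
      proof -
        have "t * (M + norm xs) \<le> (\<delta> / (M + norm xs + 1)) * (M + norm xs)"
          using M0 by (intro mult_right_mono) (auto simp: t_def)
        also have "\<dots> = \<delta> * ((M + norm xs) / (M + norm xs + 1))" by simp
        also have "\<dots> < \<delta> * 1" using d p2 by (intro mult_strict_left_mono) (auto simp: divide_less_eq)
        finally show ?thesis by simp
      qed
      define a where "a = z + (1 / t) *\<^sub>R u"
      obtain as where aT: "(a, as) \<in> T" using full_domain[OF maxm bd M0] by blast
      have asM: "norm as \<le> M" using bd aT by force
      define y where "y = (1 - t) *\<^sub>R (z, xs) + t *\<^sub>R (a, as)"
      have tu: "t *\<^sub>R ((1 / t) *\<^sub>R u) = u" using t0 by simp
      have "(1 - t) *\<^sub>R z + t *\<^sub>R a = ((1 - t) *\<^sub>R z + t *\<^sub>R z) + t *\<^sub>R ((1 / t) *\<^sub>R u)"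
        by (simp only: a_def scaleR_add_right add.assoc)
      also have "\<dots> = z + u" by (simp only: tu scaleR_left_distrib[symmetric]) simp
      also have "\<dots> = x" by (simp add: u_def)
      finally have zx: "(1 - t) *\<^sub>R z + t *\<^sub>R a = x" .
      have yx: "y = (x, (1 - t) *\<^sub>R xs + t *\<^sub>R as)"
        unfolding y_def using zx by simp
      have haa: "h (a, as) \<le> ereal (pairing a as)" using hT[OF aT] by simp
      have hy: "h y \<le> ereal ((1 - t) * c + t * pairing a as)"
        unfolding y_def by (rule ereal_convexD[OF cvx hz haa]) (use t0 in auto)
      have pa: "pairing a as = pairing z as + (1 / t) * pairing u as" by (simp add: a_def)
      have pz: "pairing z as \<le> M * norm z"
        using pairing_bound[of z as] asM by (smt (verit, best) mult_right_mono norm_ge_zero)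
      have pu: "pairing u as \<le> M * norm u"
        using pairing_bound[of u as] asM by (smt (verit, best) mult_right_mono norm_ge_zero)
      have "t * pairing a as = t * pairing z as + pairing u as" using pa t0 by (simp add: distrib_left)
      moreover have "t * pairing z as \<le> t * (M * norm z)" using pz t0 by (simp add: mult_left_mono)
      ultimately have "t * pairing a as \<le> t * (M * norm z) + M * norm u" using pu by linarith
      moreover have "- (t * c) \<le> t * \<bar>c\<bar>"
      proof -
        have "t * (- c) \<le> t * \<bar>c\<bar>" using t0 by (intro mult_left_mono) auto
        then show ?thesis by simp
      qed
      moreover have "t * (M * norm z + \<bar>c\<bar>) = t * (M * norm z) + t * \<bar>c\<bar>" by (simp add: distrib_left)
      moreover have "(1 - t) * c = c - t * c" by (simp add: left_diff_distrib)
      ultimately have "(1 - t) * c + t * pairing a as \<le> c + M * norm u + e"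
        using t1 by linarith
      then have "ereal ((1 - t) * c + t * pairing a as) \<le> ereal (c + M * norm u + e)" by simp
      then have "h y \<le> ereal (c + M * norm u + e)" using hy by (rule order_trans[rotated])
      then have "y \<in> ?L" by simp
      moreover have "dist y (x, xs) < \<delta>"
      proof -
        have "dist y (x, xs) = sqrt ((dist x x)\<^sup>2 + (dist ((1 - t) *\<^sub>R xs + t *\<^sub>R as) xs)\<^sup>2)"
          unfolding yx by (rule dist_Pair_Pair)
        also have "\<dots> = dist ((1 - t) *\<^sub>R xs + t *\<^sub>R as) xs" by simp
        also have "\<dots> = norm ((1 - t) *\<^sub>R xs + t *\<^sub>R as - xs)" by (rule dist_norm)
        also have "(1 - t) *\<^sub>R xs + t *\<^sub>R as - xs = t *\<^sub>R (as - xs)"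
          by (simp add: scaleR_diff_left scaleR_diff_right)
        also have "norm (t *\<^sub>R (as - xs)) \<le> t * (M + norm xs)"
        proof -
          have "norm (as - xs) \<le> M + norm xs" using asM norm_triangle_ineq4[of as xs] by linarith
          then have "t * norm (as - xs) \<le> t * (M + norm xs)" using t0 by (intro mult_left_mono) auto
          then show ?thesis using t0 by simp
        qed
        finally show ?thesis using t2 by linarith
      qed
      ultimately show ?thesis by blast
    qed
    then have "(x, xs) \<in> ?L" using closed_approachable[OF cl] by blast
    then show ?thesis by simp
  qed
  have fin: "h (x, xs) \<noteq> \<infinity>" using eps[of 1] by auto
  have ninf: "h (x, xs) \<noteq> -\<infinity>" using hge[of x xs] by auto
  define r where "r = real_of_ereal (h (x, xs))"
  have hr: "h (x, xs) = ereal r" using fin ninf unfolding r_def by (cases "h (x, xs)") auto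
  have "r \<le> c + M * norm u + e" if "e > 0" for e using eps[OF that] hr by simp
  then have "r \<le> c + M * norm u" by (rule field_le_epsilon)
  then show ?thesis using hr by (simp add: u_def)
qed



lemma norm_from_pairing:
  assumes "0 \<le> L" "\<And>v. pairing v xs \<le> L * norm v"
  shows "norm xs \<le> L"
proof -
  have "norm (blinfun_apply xs y) \<le> L * norm y" for y
    using assms(2)[of y] assms(2)[of "-y"] by (simp add: pairing_def blinfun.minus_right)
  then show ?thesis using assms(1) by (intro norm_blinfun_bound) auto
qed

lemma bdd_range_M:
  assumes "bounded (range_op T)"
  obtains M where "0 \<le> M" "\<forall>p\<in>T. norm (snd p) \<le> M"
proof -
  obtain M0 where "\<forall>y\<in>range_op T. norm y \<le> M0" using assms by (auto simp: bounded_iff)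
  then have h2: "\<forall>p\<in>T. norm (snd p) \<le> max M0 0" by (force simp: range_op_def)
  show ?thesis by (rule that[of "max M0 0", OF _ h2]) simp
qed

lemma part_a:
  assumes "maximal_monotone T" "bounded (range_op T)" "h \<in> fitz_family T"
  shows "bounded (snd ` dom_e h)"
proof -
  obtain M where M: "0 \<le> M" "\<forall>p\<in>T. norm (snd p) \<le> M" using bdd_range_M[OF assms(2)] by blast
  have "\<forall>y\<in>snd ` dom_e h. norm y \<le> M + 1"
  proof
    fix y assume "y \<in> snd ` dom_e h"
    then obtain x where "h (x, y) < \<infinity>" by (auto simp: dom_e_def)
    then show "norm y \<le> M + 1" by (rule bdd_dom[OF assms(1) M(2) M(1) assms(3)])
  qed
  then show ?thesis by (auto simp: bounded_iff)
qed

lemma part_c: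
  assumes "h \<in> fitz_family T" "bounded (snd ` dom_e h)"
  shows "bounded (range_op T)"
proof -
  have "range_op T \<subseteq> snd ` dom_e h"
  proof
    fix y assume "y \<in> range_op T"
    then obtain x where xT: "(x, y) \<in> T" by (auto simp: range_op_def)
    then have "h (x, y) = ereal (pairing x y)" using assms(1) by (simp add: fitz_family_def)
    then have "(x, y) \<in> dom_e h" by (simp add: dom_e_def)
    then show "y \<in> snd ` dom_e h" by force
  qed
  then show ?thesis using assms(2) bounded_subset by blast
qed

lemma part_d:
  assumes maxm: "maximal_monotone T" and M: "0 \<le> M" "\<forall>p\<in>T. norm (snd p) \<le> M"
    and hF: "h \<in> fitz_family T" and xs: "xs \<in> snd ` dom_e h"
  shows "\<bar>h (x, xs)\<bar> \<noteq> \<infinity>" "\<bar>h (x, xs) - h (z, xs)\<bar> \<le> ereal (M * norm (x - z))"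
proof -
  obtain z0 where z0: "h (z0, xs) < \<infinity>" using xs by (auto simp: dom_e_def)
  have hge: "\<And>a as. h (a, as) \<ge> ereal (pairing a as)" using hF by (auto simp: fitz_family_def)
  have fin: "\<exists>r. h (y, xs) = ereal r" for y
  proof -
    have "h (z0, xs) \<noteq> -\<infinity>" using hge[of z0 xs] by auto
    then obtain c0 where c0: "h (z0, xs) = ereal c0" using z0 by (cases "h (z0, xs)") auto
    have "h (y, xs) \<le> ereal (c0 + M * norm (y - z0))"
      using lip_upper[OF maxm M(2) M(1) hF, of z0 xs c0 y] c0 by simp
    moreover have "h (y, xs) \<noteq> -\<infinity>" using hge[of y xs] by auto
    ultimately show ?thesis by (cases "h (y, xs)") auto
  qed
  obtain rx where rx: "h (x, xs) = ereal rx" using fin by blast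
  obtain rz where rz: "h (z, xs) = ereal rz" using fin by blast
  show "\<bar>h (x, xs)\<bar> \<noteq> \<infinity>" using rx by simp
  have "rx \<le> rz + M * norm (x - z)" using lip_upper[OF maxm M(2) M(1) hF, of z xs rz x] rx rz by simp
  moreover have "rz \<le> rx + M * norm (x - z)"
    using lip_upper[OF maxm M(2) M(1) hF, of x xs rx z] rx rz by (simp add: norm_minus_commute)
  ultimately have "\<bar>rx - rz\<bar> \<le> M * norm (x - z)" by linarith
  then show "\<bar>h (x, xs) - h (z, xs)\<bar> \<le> ereal (M * norm (x - z))" using rx rz by simp
qed

lemma part_e:
  assumes hF: "h \<in> fitz_family T"
    and fin: "\<forall>xs\<in>snd ` dom_e h. \<forall>x. \<bar>h (x, xs)\<bar> \<noteq> \<infinity>"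
    and L: "0 \<le> L" "\<forall>xs\<in>snd ` dom_e h. \<forall>x z. \<bar>h (x, xs) - h (z, xs)\<bar> \<le> ereal (L * norm (x - z))"
  shows "bounded (range_op T)"
proof -
  have "norm as \<le> L" if aT: "(a, as) \<in> T" for a as
  proof (rule norm_from_pairing[OF L(1)])
    fix v
    have ha: "h (a, as) = ereal (pairing a as)" using hF aT by (simp add: fitz_family_def)
    then have "(a, as) \<in> dom_e h" by (simp add: dom_e_def)
    then have asd: "as \<in> snd ` dom_e h" by (rule image_eqI[rotated]) simp
    have "\<bar>h (a + v, as)\<bar> \<noteq> \<infinity>" using spec[OF bspec[OF fin asd], of "a + v"] .
    then obtain r where r: "h (a + v, as) = ereal r" by (cases "h (a + v, as)") auto
    have "ereal (pairing (a + v) as) \<le> h (a + v, as)" using hF unfolding fitz_family_def by (simp del: pairing_simps)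
    then have r1: "pairing (a + v) as \<le> r" using r by simp
    have "\<bar>h (a + v, as) - h (a, as)\<bar> \<le> ereal (L * norm (a + v - a))" using L(2) asd by blast
    then have "\<bar>r - pairing a as\<bar> \<le> L * norm v" using r ha by simp
    then show "pairing v as \<le> L * norm v" using r1 by simp
  qed
  then have "\<forall>y\<in>range_op T. norm y \<le> L" by (auto simp: range_op_def)
  then show ?thesis by (auto simp: bounded_iff)
qed

theorem lemma4p4:
  fixes T :: "('a::banach) dualpair set"
  assumes "maximal_monotone T"
  shows "(bounded (range_op T) \<longleftrightarrow>
            (\<forall>h\<in>fitz_family T. bounded (snd ` dom_e h)))
       \<and> (bounded (range_op T) \<longleftrightarrow>
            (\<exists>h\<in>fitz_family T. bounded (snd ` dom_e h)))
       \<and> (bounded (range_op T) \<longleftrightarrow>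
            ((\<forall>h\<in>fitz_family T. \<forall>xs\<in>snd ` dom_e h. \<forall>x. \<bar>h (x, xs)\<bar> \<noteq> \<infinity>) \<and>
             (\<exists>L::real. 0 \<le> L \<and> (\<forall>h\<in>fitz_family T. \<forall>xs\<in>snd ` dom_e h. \<forall>x z.
                 \<bar>h (x, xs) - h (z, xs)\<bar> \<le> ereal (L * norm (x - z))))))
       \<and> (bounded (range_op T) \<longleftrightarrow>
            (\<exists>h\<in>fitz_family T.
               (\<forall>xs\<in>snd ` dom_e h. \<forall>x. \<bar>h (x, xs)\<bar> \<noteq> \<infinity>) \<and>
               (\<exists>L::real. 0 \<le> L \<and> (\<forall>xs\<in>snd ` dom_e h. \<forall>x z.
                 \<bar>h (x, xs) - h (z, xs)\<bar> \<le> ereal (L * norm (x - z))))))"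
proof -
  have phi: "fitz T \<in> fitz_family T" using fitz_mem[OF assms] .
  have d: "(\<forall>h\<in>fitz_family T. \<forall>xs\<in>snd ` dom_e h. \<forall>x. \<bar>h (x, xs)\<bar> \<noteq> \<infinity>) \<and>
             (\<exists>L::real. 0 \<le> L \<and> (\<forall>h\<in>fitz_family T. \<forall>xs\<in>snd ` dom_e h. \<forall>x z.
                 \<bar>h (x, xs) - h (z, xs)\<bar> \<le> ereal (L * norm (x - z))))"
    if B: "bounded (range_op T)"
  proof -
    obtain M where M: "0 \<le> M" "\<forall>p\<in>T. norm (snd p) \<le> M" using bdd_range_M[OF B] by blast
    have p1: "\<forall>h\<in>fitz_family T. \<forall>xs\<in>snd ` dom_e h. \<forall>x. \<bar>h (x, xs)\<bar> \<noteq> \<infinity>"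
    proof (intro ballI allI)
      fix h xs x assume "h \<in> fitz_family T" "xs \<in> snd ` dom_e h"
      then show "\<bar>h (x, xs)\<bar> \<noteq> \<infinity>" by (rule part_d(1)[OF assms M])
    qed
    have p2: "\<forall>h\<in>fitz_family T. \<forall>xs\<in>snd ` dom_e h. \<forall>x z.
                 \<bar>h (x, xs) - h (z, xs)\<bar> \<le> ereal (M * norm (x - z))"
    proof (intro ballI allI)
      fix h xs x z assume "h \<in> fitz_family T" "xs \<in> snd ` dom_e h"
      then show "\<bar>h (x, xs) - h (z, xs)\<bar> \<le> ereal (M * norm (x - z))" by (rule part_d(2)[OF assms M])
    qed
    show ?thesis using p1 p2 M(1) by blast
  qed
  have i1: "bounded (range_op T) \<longleftrightarrow> (\<forall>h\<in>fitz_family T. bounded (snd ` dom_e h))"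
  proof
    assume B: "bounded (range_op T)"
    show "\<forall>h\<in>fitz_family T. bounded (snd ` dom_e h)"
    proof
      fix h assume "h \<in> fitz_family T"
      then show "bounded (snd ` dom_e h)" by (rule part_a[OF assms B])
    qed
  next
    assume H: "\<forall>h\<in>fitz_family T. bounded (snd ` dom_e h)"
    show "bounded (range_op T)" by (rule part_c[OF phi bspec[OF H phi]])
  qed
  have i2: "bounded (range_op T) \<longleftrightarrow> (\<exists>h\<in>fitz_family T. bounded (snd ` dom_e h))"
  proof
    assume B: "bounded (range_op T)"
    show "\<exists>h\<in>fitz_family T. bounded (snd ` dom_e h)"
      using part_a[OF assms B phi] phi by blast
  next
    assume "\<exists>h\<in>fitz_family T. bounded (snd ` dom_e h)"
    then obtain h where "h \<in> fitz_family T" "bounded (snd ` dom_e h)" by blast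
    then show "bounded (range_op T)" by (rule part_c)
  qed
  have i3: "bounded (range_op T) \<longleftrightarrow>
            ((\<forall>h\<in>fitz_family T. \<forall>xs\<in>snd ` dom_e h. \<forall>x. \<bar>h (x, xs)\<bar> \<noteq> \<infinity>) \<and>
             (\<exists>L::real. 0 \<le> L \<and> (\<forall>h\<in>fitz_family T. \<forall>xs\<in>snd ` dom_e h. \<forall>x z.
                 \<bar>h (x, xs) - h (z, xs)\<bar> \<le> ereal (L * norm (x - z)))))"
  proof
    assume B: "bounded (range_op T)"
    then show "(\<forall>h\<in>fitz_family T. \<forall>xs\<in>snd ` dom_e h. \<forall>x. \<bar>h (x, xs)\<bar> \<noteq> \<infinity>) \<and>
             (\<exists>L::real. 0 \<le> L \<and> (\<forall>h\<in>fitz_family T. \<forall>xs\<in>snd ` dom_e h. \<forall>x z.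
                 \<bar>h (x, xs) - h (z, xs)\<bar> \<le> ereal (L * norm (x - z))))" by (rule d)
  next
    assume H: "(\<forall>h\<in>fitz_family T. \<forall>xs\<in>snd ` dom_e h. \<forall>x. \<bar>h (x, xs)\<bar> \<noteq> \<infinity>) \<and>
             (\<exists>L::real. 0 \<le> L \<and> (\<forall>h\<in>fitz_family T. \<forall>xs\<in>snd ` dom_e h. \<forall>x z.
                 \<bar>h (x, xs) - h (z, xs)\<bar> \<le> ereal (L * norm (x - z))))"
    then obtain L where L: "0 \<le> L" "\<forall>h\<in>fitz_family T. \<forall>xs\<in>snd ` dom_e h. \<forall>x z.
                 \<bar>h (x, xs) - h (z, xs)\<bar> \<le> ereal (L * norm (x - z))" by blast
    have f: "\<forall>xs\<in>snd ` dom_e (fitz T). \<forall>x. \<bar>fitz T (x, xs)\<bar> \<noteq> \<infinity>"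
      by (rule bspec[OF conjunct1[OF H] phi])
    have l2: "\<forall>xs\<in>snd ` dom_e (fitz T). \<forall>x z.
                 \<bar>fitz T (x, xs) - fitz T (z, xs)\<bar> \<le> ereal (L * norm (x - z))"
      by (rule bspec[OF L(2) phi])
    show "bounded (range_op T)" by (rule part_e[OF phi f L(1) l2])
  qed
  have i4: "bounded (range_op T) \<longleftrightarrow>
            (\<exists>h\<in>fitz_family T.
               (\<forall>xs\<in>snd ` dom_e h. \<forall>x. \<bar>h (x, xs)\<bar> \<noteq> \<infinity>) \<and>
               (\<exists>L::real. 0 \<le> L \<and> (\<forall>xs\<in>snd ` dom_e h. \<forall>x z.
                 \<bar>h (x, xs) - h (z, xs)\<bar> \<le> ereal (L * norm (x - z)))))"
  proof
    assume B: "bounded (range_op T)"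
    have H: "(\<forall>h\<in>fitz_family T. \<forall>xs\<in>snd ` dom_e h. \<forall>x. \<bar>h (x, xs)\<bar> \<noteq> \<infinity>) \<and>
             (\<exists>L::real. 0 \<le> L \<and> (\<forall>h\<in>fitz_family T. \<forall>xs\<in>snd ` dom_e h. \<forall>x z.
                 \<bar>h (x, xs) - h (z, xs)\<bar> \<le> ereal (L * norm (x - z))))" by (rule d[OF B])
    then obtain L where L: "0 \<le> L" "\<forall>h\<in>fitz_family T. \<forall>xs\<in>snd ` dom_e h. \<forall>x z.
                 \<bar>h (x, xs) - h (z, xs)\<bar> \<le> ereal (L * norm (x - z))" by blast
    have f: "\<forall>xs\<in>snd ` dom_e (fitz T). \<forall>x. \<bar>fitz T (x, xs)\<bar> \<noteq> \<infinity>"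
      by (rule bspec[OF conjunct1[OF H] phi])
    have l2: "\<forall>xs\<in>snd ` dom_e (fitz T). \<forall>x z.
                 \<bar>fitz T (x, xs) - fitz T (z, xs)\<bar> \<le> ereal (L * norm (x - z))"
      by (rule bspec[OF L(2) phi])
    show "\<exists>h\<in>fitz_family T.
               (\<forall>xs\<in>snd ` dom_e h. \<forall>x. \<bar>h (x, xs)\<bar> \<noteq> \<infinity>) \<and>
               (\<exists>L::real. 0 \<le> L \<and> (\<forall>xs\<in>snd ` dom_e h. \<forall>x z.
                 \<bar>h (x, xs) - h (z, xs)\<bar> \<le> ereal (L * norm (x - z))))"
    proof (rule bexI[OF _ phi])
      show "(\<forall>xs\<in>snd ` dom_e (fitz T). \<forall>x. \<bar>fitz T (x, xs)\<bar> \<noteq> \<infinity>) \<and>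
               (\<exists>L::real. 0 \<le> L \<and> (\<forall>xs\<in>snd ` dom_e (fitz T). \<forall>x z.
                 \<bar>fitz T (x, xs) - fitz T (z, xs)\<bar> \<le> ereal (L * norm (x - z))))"
        using f l2 L(1) by blast
    qed
  next
    assume "\<exists>h\<in>fitz_family T.
               (\<forall>xs\<in>snd ` dom_e h. \<forall>x. \<bar>h (x, xs)\<bar> \<noteq> \<infinity>) \<and>
               (\<exists>L::real. 0 \<le> L \<and> (\<forall>xs\<in>snd ` dom_e h. \<forall>x z.
                 \<bar>h (x, xs) - h (z, xs)\<bar> \<le> ereal (L * norm (x - z))))"
    then obtain h L where h: "h \<in> fitz_family T" "\<forall>xs\<in>snd ` dom_e h. \<forall>x. \<bar>h (x, xs)\<bar> \<noteq> \<infinity>"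
        "0 \<le> L" "\<forall>xs\<in>snd ` dom_e h. \<forall>x z. \<bar>h (x, xs) - h (z, xs)\<bar> \<le> ereal (L * norm (x - z))"
      by blast
    show "bounded (range_op T)" by (rule part_e[OF h])
  qed
  show ?thesis by (rule conjI[OF i1 conjI[OF i2 conjI[OF i3 i4]]])
qed

end
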